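(* Let $\psi:\mathcal{Q}\to\mathcal{P}$ be a full upper semilattice morphism with $\mathcal{P},\mathcal{Q}$ finite and $\uparrow\psi(\mathcal{Q})=\mathcal{P}$, and let $S\subseteq\mathcal{P}$ be a spread. If $\min S\subseteq\psi(\mathcal{Q})$ and $\operatorname{cover}S\subseteq\psi(\mathcal{Q})$, then $\mathbb{k}_S\cong\mathrm{Lan}_\psi(\mathbb{k}_{\lfloor S\rfloor_\psi})$ in $\operatorname{rep}\mathcal{P}$; in particular $\mathbb{k}_S$ is in the essential image of $\mathrm{Lan}_\psi$.
   Context: Fix a field $\mathbb{k}$. Upper semilattices have joins of finite nonempty subsets; $\psi$ full means $\psi(q)\le\psi(q')\Rightarrow q\le q'$; upper semilattice morphisms preserve such joins. $\uparrow X=\{p:\exists x\in X,x\le p\}$; $\operatorname{cover}X=\min(\uparrow X\setminus X)$. A spread is a nonempty convex zigzag-connected subset; $\mathbb{k}_S$ is the indicator representation of a convex set $S$. $\lfloor p\rfloor_\psi=\bigvee\{q\in\mathcal{Q}:\psi(q)\le p\}$ and $\lfloor S\rfloor_\psi=\{\lfloor s\rfloor_\psi: s\in S\}$. $\mathrm{Lan}_\psi:\operatorname{rep}\mathcal{Q}\to\operatorname{rep}\mathcal{P}$ is the left adjoint of restriction along $\psi$, given by $N\mapsto N\circ\lfloor-\rfloor_\psi$; $\operatorname{rep}$ of a finite poset is the category of functors to finite-dimensional vector spaces. *)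

theory Defs
  imports "Jordan_Normal_Form.Matrix"
begin

text \<open>Finite posets that are upper semilattices are modelled as finite types of class
semilattice_sup (binary joins, hence joins of all finite nonempty subsets).\<close>

definition up_set :: "'p::order set \<Rightarrow> 'p set" where
  "up_set X = {p. \<exists>x\<in>X. x \<le> p}"

definition min_set :: "'p::order set \<Rightarrow> 'p set" where
  "min_set X = {x\<in>X. \<not> (\<exists>y\<in>X. y < x)}"

definition cover_set :: "'p::order set \<Rightarrow> 'p set" where
  "cover_set X = min_set (up_set X - X)"

definition convex_set :: "'p::order set \<Rightarrow> bool" where
  "convex_set S \<longleftrightarrow> (\<forall>a\<in>S. \<forall>c\<in>S. \<forall>b. a \<le> b \<and> b \<le> c \<longrightarrow> b \<in> S)"

definition zigzag_connected :: "'p::order set \<Rightarrow> bool" where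
  "zigzag_connected S \<longleftrightarrow>
     (\<forall>a\<in>S. \<forall>b\<in>S. (\<lambda>x y. x \<in> S \<and> y \<in> S \<and> (x \<le> y \<or> y \<le> x))\<^sup>*\<^sup>* a b)"

definition spread :: "'p::order set \<Rightarrow> bool" where
  "spread S \<longleftrightarrow> S \<noteq> {} \<and> convex_set S \<and> zigzag_connected S"

definition full_map :: "('q::order \<Rightarrow> 'p::order) \<Rightarrow> bool" where
  "full_map \<psi> \<longleftrightarrow> (\<forall>q q'. \<psi> q \<le> \<psi> q' \<longrightarrow> q \<le> q')"

definition usl_morphism :: "('q::semilattice_sup \<Rightarrow> 'p::semilattice_sup) \<Rightarrow> bool" where
  "usl_morphism \<psi> \<longleftrightarrow> (\<forall>A. finite A \<and> A \<noteq> {} \<longrightarrow> \<psi> (Sup_fin A) = Sup_fin (\<psi> ` A))"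

definition floor_psi :: "('q::semilattice_sup \<Rightarrow> 'p::order) \<Rightarrow> 'p \<Rightarrow> 'q" where
  "floor_psi \<psi> p = Sup_fin {q. \<psi> q \<le> p}"

text \<open>A representation of a poset over a field: a dimension at each point and, for
each comparable pair p \<le> q, a (dim q) x (dim p) matrix, functorially.\<close>

type_synonym ('p, 'k) rep = "('p \<Rightarrow> nat) \<times> ('p \<Rightarrow> 'p \<Rightarrow> 'k mat)"

definition is_rep :: "('p::order, 'k::field) rep \<Rightarrow> bool" where
  "is_rep V \<longleftrightarrow> (case V of (d, M) \<Rightarrow>
     (\<forall>p q. p \<le> q \<longrightarrow> M p q \<in> carrier_mat (d q) (d p)) \<and>
     (\<forall>p. M p p = 1\<^sub>m (d p)) \<and>
     (\<forall>p q r. p \<le> q \<longrightarrow> q \<le> r \<longrightarrow> M p r = M q r * M p q))"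

definition rep_iso :: "('p::order, 'k::field) rep \<Rightarrow> ('p, 'k) rep \<Rightarrow> bool" where
  "rep_iso V W \<longleftrightarrow> is_rep V \<and> is_rep W \<and>
     (\<exists>\<phi>. \<forall>p. \<phi> p \<in> carrier_mat (fst W p) (fst V p) \<and> invertible_mat (\<phi> p) \<and>
        (\<forall>q. p \<le> q \<longrightarrow> \<phi> q * snd V p q = snd W p q * \<phi> p))"

definition indicator_rep :: "'p::order set \<Rightarrow> ('p, 'k::field) rep" where
  "indicator_rep S = ((\<lambda>p. if p \<in> S then 1 else 0),
     (\<lambda>p q. if p \<in> S \<and> q \<in> S then 1\<^sub>m 1
            else 0\<^sub>m (if q \<in> S then 1 else 0) (if p \<in> S then 1 else 0)))"

definition Lan :: "('q::semilattice_sup \<Rightarrow> 'p::order) \<Rightarrow> ('q, 'k) rep \<Rightarrow> ('p, 'k) rep" where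
  "Lan \<psi> N = ((\<lambda>p. fst N (floor_psi \<psi> p)),
               (\<lambda>p q. snd N (floor_psi \<psi> p) (floor_psi \<psi> q)))"

end

theory Submission
  imports Defs
begin

lemma mat_dim0_eq:
  assumes "A \<in> carrier_mat r c" "B \<in> carrier_mat r c" "r = 0 \<or> c = 0"
  shows "A = B"
  using assms by (intro eq_matI) auto

lemma invertible_one_mat: "invertible_mat (1\<^sub>m n :: 'k::field mat)"
  unfolding invertible_mat_def inverts_mat_def square_mat.simps
  by (intro conjI exI[of _ "1\<^sub>m n"]) auto

lemma rep_iso_refl:
  assumes "is_rep (V :: ('p::order,'k::field) rep)"
  shows "rep_iso V V"
proof -
  obtain d M where V: "V = (d, M)" by (cases V)
  have C: "p \<le> q \<Longrightarrow> M p q \<in> carrier_mat (d q) (d p)" for p q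
    using assms unfolding V is_rep_def prod.case by blast
  have "\<forall>p. 1\<^sub>m (d p) \<in> carrier_mat (d p) (d p) \<and> invertible_mat (1\<^sub>m (d p) :: 'k mat) \<and>
        (\<forall>q. p \<le> q \<longrightarrow> 1\<^sub>m (d q) * M p q = M p q * 1\<^sub>m (d p))"
  proof (intro allI conjI impI)
    fix p q :: 'p
    show "1\<^sub>m (d p) \<in> carrier_mat (d p) (d p)" by (rule one_carrier_mat)
    show "invertible_mat (1\<^sub>m (d p) :: 'k mat)" by (rule invertible_one_mat)
    assume "p \<le> q"
    then have c: "M p q \<in> carrier_mat (d q) (d p)" by (rule C)
    have "1\<^sub>m (d q) * M p q = M p q" by (rule left_mult_one_mat[OF c])
    also have "\<dots> = M p q * 1\<^sub>m (d p)" by (rule right_mult_one_mat[OF c, symmetric])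
    finally show "1\<^sub>m (d q) * M p q = M p q * 1\<^sub>m (d p)" .
  qed
  then show ?thesis unfolding rep_iso_def V fst_conv snd_conv
    using assms[unfolded V] by (intro conjI exI[of _ "\<lambda>p. 1\<^sub>m (d p)"])
qed

lemma indicator_is_rep:
  assumes "convex_set S"
  shows "is_rep (indicator_rep S :: ('p::order,'k::field) rep)"
proof -
  define d :: "'p \<Rightarrow> nat" where "d = (\<lambda>p. if p \<in> S then 1 else 0)"
  define M :: "'p \<Rightarrow> 'p \<Rightarrow> 'k mat" where "M = (\<lambda>p q. if p \<in> S \<and> q \<in> S then 1\<^sub>m 1
            else 0\<^sub>m (if q \<in> S then 1 else 0) (if p \<in> S then 1 else 0))"
  have I: "indicator_rep S = (d, M)" unfolding indicator_rep_def d_def M_def by (rule refl)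
  have C: "M p q \<in> carrier_mat (d q) (d p)" for p q unfolding M_def d_def by simp
  have 1: "M p p = 1\<^sub>m (d p)" for p
  proof (cases "p \<in> S")
    case True then show ?thesis unfolding M_def d_def by simp
  next
    case False
    have "1\<^sub>m (d p) \<in> carrier_mat (d p) (d p)" by simp
    moreover have "d p = 0" using False unfolding d_def by simp
    ultimately show ?thesis using C[of p p] by (intro mat_dim0_eq[of _ "d p" "d p"]) simp_all
  qed
  have 3: "M p r = M q r * M p q" if pq: "p \<le> q" and qr: "q \<le> r" for p q r
  proof (cases "p \<in> S \<and> r \<in> S")
    case True
    then have "q \<in> S" using assms pq qr unfolding convex_set_def by blast
    then show ?thesis using True unfolding M_def by simp
  next
    case False
    have P: "M q r * M p q \<in> carrier_mat (d r) (d p)" using C by (meson mult_carrier_mat)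
    have z: "d r = 0 \<or> d p = 0" using False unfolding d_def by simp
    show ?thesis by (rule mat_dim0_eq[OF C P z])
  qed
  show ?thesis unfolding I is_rep_def prod.case using C 1 3 by blast
qed

locale fl =
  fixes \<psi> :: "'q::{semilattice_sup,finite} \<Rightarrow> 'p::{semilattice_sup,finite}"
  assumes usl: "usl_morphism \<psi>" and full: "full_map \<psi>"
    and up: "up_set (range \<psi>) = UNIV"
begin

lemma floor_ge: "\<psi> q \<le> p \<Longrightarrow> q \<le> floor_psi \<psi> p"
  unfolding floor_psi_def by (rule Sup_fin.coboundedI) auto

lemma floor_le: "\<psi> (floor_psi \<psi> p) \<le> p"
proof -
  have "p \<in> up_set (range \<psi>)" using up by simp
  then obtain q where q: "\<psi> q \<le> p" unfolding up_set_def by auto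
  let ?A = "{q. \<psi> q \<le> p}"
  have ne: "?A \<noteq> {}" using q by auto
  have "\<psi> (Sup_fin ?A) = Sup_fin (\<psi> ` ?A)" using usl ne unfolding usl_morphism_def by auto
  also have "\<dots> \<le> p" using ne by (intro Sup_fin.boundedI) auto
  finally show ?thesis unfolding floor_psi_def .
qed

lemma mono_psi: "a \<le> b \<Longrightarrow> \<psi> a \<le> \<psi> b"
proof -
  assume "a \<le> b"
  have h: "\<forall>A. finite A \<and> A \<noteq> {} \<longrightarrow> \<psi> (Sup_fin A) = Sup_fin (\<psi> ` A)"
    using usl unfolding usl_morphism_def by blast
  have "\<psi> (Sup_fin {a,b}) = Sup_fin (\<psi> ` {a,b})" using h[rule_format, of "{a,b}"] by blast
  then have "\<psi> (sup a b) = sup (\<psi> a) (\<psi> b)" by simp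
  then show ?thesis using \<open>a \<le> b\<close> by (metis sup.absorb2 sup.cobounded1)
qed

lemma floor_psi_psi: "floor_psi \<psi> (\<psi> b) = b"
proof -
  have "b \<le> floor_psi \<psi> (\<psi> b)" by (rule floor_ge) simp
  moreover have "floor_psi \<psi> (\<psi> b) \<le> b" using floor_le full unfolding full_map_def by blast
  ultimately show ?thesis by simp
qed

lemma floor_mono: "p \<le> q \<Longrightarrow> floor_psi \<psi> p \<le> floor_psi \<psi> q"
  using floor_le floor_ge order_trans by blast

lemma minimal_below:
  fixes A :: "'a::order set"
  assumes "finite A" "p \<in> A"
  shows "\<exists>c\<in>min_set A. c \<le> p"
proof -
  obtain m where "m \<in> A" "m \<le> p" "\<forall>b\<in>A. b \<le> m \<longrightarrow> m = b"
    using finite_has_minimal2[OF assms] by blast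
  then show ?thesis unfolding min_set_def by (auto simp: less_le)
qed

lemma key:
  assumes S: "convex_set S" and cov: "cover_set S \<subseteq> range \<psi>"
    and mn: "min_set S \<subseteq> range \<psi>"
    and s: "s \<in> S" and eq: "floor_psi \<psi> p = floor_psi \<psi> s"
  shows "p \<in> S"
proof (rule ccontr)
  assume pn: "p \<notin> S"
  obtain m where m: "m \<in> min_set S" "m \<le> s" using minimal_below[of S s] s by auto
  then obtain q where q: "m = \<psi> q" using mn by auto
  have "q \<le> floor_psi \<psi> s" using floor_ge m q by simp
  then have "\<psi> q \<le> \<psi> (floor_psi \<psi> p)" using eq mono_psi by simp
  also have "\<dots> \<le> p" by (rule floor_le)
  finally have "m \<le> p" using q by simp
  then have "p \<in> up_set S - S" using m pn unfolding up_set_def min_set_def by auto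
  then obtain c where c: "c \<in> cover_set S" "c \<le> p" using minimal_below[of "up_set S - S" p]
    unfolding cover_set_def by auto
  then obtain q' where q': "c = \<psi> q'" using cov by auto
  have "q' \<le> floor_psi \<psi> p" using floor_ge c(2) q' by simp
  then have "\<psi> q' \<le> \<psi> (floor_psi \<psi> s)" using eq mono_psi by simp
  also have "\<dots> \<le> s" by (rule floor_le)
  finally have cs: "c \<le> s" using q' by simp
  have "c \<in> up_set S" "c \<notin> S" using c unfolding cover_set_def min_set_def by auto
  then obtain a where "a \<in> S" "a \<le> c" unfolding up_set_def by auto
  then have "c \<in> S" using S cs s unfolding convex_set_def by blast
  then show False using \<open>c \<notin> S\<close> by simp
qed

end

theorem mainTheorem14:
  fixes \<psi> :: "'q::{semilattice_sup,finite} \<Rightarrow> 'p::{semilattice_sup,finite}"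
    and S :: "'p set"
  assumes "usl_morphism \<psi>" and "full_map \<psi>"
    and "up_set (range \<psi>) = UNIV"
    and "spread S"
    and "min_set S \<subseteq> range \<psi>"
    and "cover_set S \<subseteq> range \<psi>"
  shows "rep_iso (indicator_rep S :: ('p, 'k::field) rep)
                 (Lan \<psi> (indicator_rep (floor_psi \<psi> ` S)))
       \<and> (\<exists>N :: ('q, 'k) rep. is_rep N \<and> rep_iso (indicator_rep S) (Lan \<psi> N))"
proof -
  interpret fl \<psi> using assms(1-3) by unfold_locales
  have S: "convex_set S" using assms(4) unfolding spread_def by blast
  define T where "T = floor_psi \<psi> ` S"
  have keq: "(floor_psi \<psi> p \<in> T) = (p \<in> S)" for p
  proof
    assume "floor_psi \<psi> p \<in> T"
    then obtain s where "s \<in> S" "floor_psi \<psi> p = floor_psi \<psi> s" unfolding T_def by blast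
    then show "p \<in> S" by (rule key[OF S assms(6) assms(5)])
  next
    assume "p \<in> S" then show "floor_psi \<psi> p \<in> T" unfolding T_def by (rule imageI)
  qed
  have L: "Lan \<psi> (indicator_rep T :: ('q,'k) rep) = indicator_rep S"
    by (simp only: Lan_def indicator_rep_def fst_conv snd_conv keq)
  have T: "convex_set T" unfolding convex_set_def
  proof (intro ballI allI impI)
    fix a c b assume a: "a \<in> T" and c: "c \<in> T" and abc: "a \<le> b \<and> b \<le> c"
    obtain s1 where s1: "s1 \<in> S" "a = floor_psi \<psi> s1" using a unfolding T_def by auto
    obtain s2 where s2: "s2 \<in> S" "c = floor_psi \<psi> s2" using c unfolding T_def by auto
    have "floor_psi \<psi> (\<psi> a) \<in> T" using s1 floor_psi_psi unfolding T_def by auto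
    then have i1: "\<psi> a \<in> S" using keq by blast
    have "\<psi> b \<le> \<psi> c" using abc mono_psi by blast
    also have "\<psi> c \<le> s2" using s2(2) floor_le by simp
    finally have "\<psi> b \<le> s2" .
    moreover have "\<psi> a \<le> \<psi> b" using abc mono_psi by blast
    ultimately have "\<psi> b \<in> S" using S i1 s2(1) unfolding convex_set_def by blast
    then have "floor_psi \<psi> (\<psi> b) \<in> T" using keq by blast
    then show "b \<in> T" using floor_psi_psi by simp
  qed
  have R: "is_rep (indicator_rep S :: ('p,'k) rep)" by (rule indicator_is_rep[OF S])
  have I: "rep_iso (indicator_rep S :: ('p, 'k) rep) (Lan \<psi> (indicator_rep T))"
    unfolding L by (rule rep_iso_refl[OF R])
  have N: "is_rep (indicator_rep T :: ('q,'k) rep)" by (rule indicator_is_rep[OF T])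
  show ?thesis unfolding T_def[symmetric]
    by (rule conjI, fact I, rule exI[of _ "indicator_rep T"], rule conjI, fact N, fact I)
qed

end
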